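(* Let $G$ be an infinite group and $S$ any finite generating set of $G$ (with $S=S^{-1}$, $e\notin S$). Then the average curvature over the ball of radius $n$ tends to zero: $$\lim_{n\to\infty}\frac{1}{|B_n|}\sum_{g\in B_n\smallsetminus\{e\}}\kappa(g)=0.$$
   Context: For a group $G$ with finite generating set $S$ ($S=S^{-1}$, $e\notin S$), $|x|$ denotes word length, $B_n=\{g\in G:|g|\le n\}$, $\mathrm{Av}(g)=\frac{1}{|S|}\sum_{a\in S}|a^{-1}ga|$, and for $g\neq e$ the curvature is $\kappa(g)=\frac{|g|-\mathrm{Av}(g)}{|g|}$. *)

theory Defs
  imports "HOL-Analysis.Analysis" "HOL-Algebra.Generated_Groups"
begin

definition word_length :: "('a, 'b) monoid_scheme \<Rightarrow> 'a set \<Rightarrow> 'a \<Rightarrow> nat" where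
  "word_length G S g =
     (LEAST n. \<exists>ws. length ws = n \<and> set ws \<subseteq> S \<and> foldr (\<otimes>\<^bsub>G\<^esub>) ws \<one>\<^bsub>G\<^esub> = g)"

definition word_ball :: "('a, 'b) monoid_scheme \<Rightarrow> 'a set \<Rightarrow> nat \<Rightarrow> 'a set" where
  "word_ball G S n = {g \<in> carrier G. word_length G S g \<le> n}"

definition avg_conj :: "('a, 'b) monoid_scheme \<Rightarrow> 'a set \<Rightarrow> 'a \<Rightarrow> real" where
  "avg_conj G S g =
     (1 / real (card S)) * (\<Sum>a\<in>S. real (word_length G S (inv\<^bsub>G\<^esub> a \<otimes>\<^bsub>G\<^esub> g \<otimes>\<^bsub>G\<^esub> a)))"

definition curvature :: "('a, 'b) monoid_scheme \<Rightarrow> 'a set \<Rightarrow> 'a \<Rightarrow> real" where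
  "curvature G S g =
     (real (word_length G S g) - avg_conj G S g) / real (word_length G S g)"

end

theory Submission
  imports Defs
begin

locale gen_group = group G for G (structure) +
  fixes S :: "'a set"
  assumes Ssub: "S \<subseteq> carrier G"
    and Sinv: "\<forall>s\<in>S. inv s \<in> S"
    and Sgen: "generate G S = carrier G"
begin

abbreviation "wl \<equiv> word_length G S"
abbreviation "fw ws \<equiv> foldr (\<otimes>) ws \<one>"

lemma fw_carrier: "set ws \<subseteq> carrier G \<Longrightarrow> fw ws \<in> carrier G"
  by (induction ws) auto

lemma fw_append: "set ws \<subseteq> carrier G \<Longrightarrow> set vs \<subseteq> carrier G \<Longrightarrow>
   fw (ws @ vs) = fw ws \<otimes> fw vs"
  by (induction ws) (auto simp: m_assoc fw_carrier)

lemma gen_word: "g \<in> generate G S \<Longrightarrow> \<exists>ws. set ws \<subseteq> S \<and> fw ws = g"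
proof (induction rule: generate.induct)
  case one
  then show ?case by (intro exI[of _ "[]"]) auto
next
  case (incl h)
  then show ?case using Ssub by (intro exI[of _ "[h]"]) auto
next
  case (inv h)
  then show ?case using Ssub Sinv by (intro exI[of _ "[inv h]"]) auto
next
  case (eng h1 h2)
  then obtain ws vs where "set ws \<subseteq> S" "fw ws = h1" "set vs \<subseteq> S" "fw vs = h2" by blast
  then show ?case using Ssub fw_append[of ws vs] by (intro exI[of _ "ws @ vs"]) auto
qed

lemma has_word: "g \<in> carrier G \<Longrightarrow> \<exists>ws. set ws \<subseteq> S \<and> fw ws = g"
  using gen_word Sgen by auto

lemma wl_le: "set ws \<subseteq> S \<Longrightarrow> fw ws = g \<Longrightarrow> wl g \<le> length ws"
  unfolding word_length_def by (rule Least_le) blast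

lemma wl_word: assumes "g \<in> carrier G"
  shows "\<exists>ws. length ws = wl g \<and> set ws \<subseteq> S \<and> fw ws = g"
proof -
  obtain ws where "set ws \<subseteq> S \<and> fw ws = g" using has_word assms by blast
  then have "\<exists>n ws. length ws = n \<and> set ws \<subseteq> S \<and> fw ws = g" by blast
  then show ?thesis unfolding word_length_def by (rule LeastI_ex)
qed

lemma wl_one: "wl \<one> = 0"
  using wl_le[of "[]" \<one>] by simp

lemma wl_pos: assumes "g \<in> carrier G" "g \<noteq> \<one>" shows "wl g \<ge> 1"
proof (rule ccontr)
  assume "\<not> wl g \<ge> 1"
  then have "wl g = 0" by simp
  with wl_word[OF assms(1)] obtain ws where "length ws = 0" "fw ws = g" by auto
  then show False using assms by simp
qed

lemma conj_le: assumes "a \<in> S" "h \<in> carrier G"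
  shows "wl (inv a \<otimes> h \<otimes> a) \<le> wl h + 2"
proof -
  obtain ws where ws: "length ws = wl h" "set ws \<subseteq> S" "fw ws = h"
    using wl_word[OF assms(2)] by blast
  have a: "a \<in> carrier G" "inv a \<in> S" using assms Ssub Sinv by auto
  have c: "set ws \<subseteq> carrier G" using ws Ssub by auto
  have "fw (inv a # ws @ [a]) = inv a \<otimes> (h \<otimes> a)"
    using fw_append[of ws "[a]"] c a ws by simp
  also have "\<dots> = inv a \<otimes> h \<otimes> a" using a assms by (simp add: m_assoc)
  finally have "wl (inv a \<otimes> h \<otimes> a) \<le> length (inv a # ws @ [a])"
    using wl_le[of "inv a # ws @ [a]"] ws a assms by auto
  then show ?thesis using ws by simp
qed

lemma conj_ge: assumes "a \<in> S" "g \<in> carrier G"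
  shows "wl g \<le> wl (inv a \<otimes> g \<otimes> a) + 2"
proof -
  have a: "a \<in> carrier G" "inv a \<in> S" using assms Ssub Sinv by auto
  have h: "inv a \<otimes> g \<otimes> a \<in> carrier G" using a assms by auto
  have "inv (inv a) \<otimes> (inv a \<otimes> g \<otimes> a) \<otimes> inv a = g"
    using a assms by (simp add: m_assoc[symmetric]) (simp add: m_assoc)
  then show ?thesis using conj_le[OF a(2) h] by simp
qed

lemma curv_bound: assumes "g \<in> carrier G" "g \<noteq> \<one>" "finite S" "S \<noteq> {}"
  shows "\<bar>curvature G S g\<bar> \<le> 2 / real (wl g)"
proof -
  have pos: "real (wl g) \<ge> 1" using wl_pos[OF assms(1,2)] by simp
  have cS: "real (card S) > 0" using assms(3,4) by (simp add: card_gt_0_iff)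
  have "real (wl g) - avg_conj G S g =
      (1 / real (card S)) * (\<Sum>a\<in>S. real (wl g) - real (wl (inv a \<otimes> g \<otimes> a)))"
    unfolding avg_conj_def using cS by (simp add: sum_subtractf field_simps)
  also have "\<bar>\<dots>\<bar> \<le> 2"
  proof -
    have "\<bar>\<Sum>a\<in>S. real (wl g) - real (wl (inv a \<otimes> g \<otimes> a))\<bar>
        \<le> (\<Sum>a\<in>S. \<bar>real (wl g) - real (wl (inv a \<otimes> g \<otimes> a))\<bar>)" by (rule sum_abs)
    also have "\<dots> \<le> (\<Sum>a\<in>S. 2)"
    proof (rule sum_mono)
      fix a assume "a \<in> S"
      then show "\<bar>real (wl g) - real (wl (inv a \<otimes> g \<otimes> a))\<bar> \<le> 2"
        using conj_le[of a g] conj_ge[of a g] assms(1) by linarith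
    qed
    also have "\<dots> = 2 * real (card S)" by simp
    finally have X: "\<bar>\<Sum>a\<in>S. real (wl g) - real (wl (inv a \<otimes> g \<otimes> a))\<bar> \<le> 2 * real (card S)" .
    have "\<bar>(1 / real (card S)) * (\<Sum>a\<in>S. real (wl g) - real (wl (inv a \<otimes> g \<otimes> a)))\<bar>
       = \<bar>\<Sum>a\<in>S. real (wl g) - real (wl (inv a \<otimes> g \<otimes> a))\<bar> / real (card S)"
      using cS by (simp add: abs_mult)
    also have "\<dots> \<le> (2 * real (card S)) / real (card S)" using X cS by (intro divide_right_mono) auto
    also have "\<dots> = 2" using cS by simp
    finally show ?thesis .
  qed
  finally have D: "\<bar>real (wl g) - avg_conj G S g\<bar> \<le> 2" .
  have "\<bar>curvature G S g\<bar> = \<bar>real (wl g) - avg_conj G S g\<bar> / real (wl g)"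
    unfolding curvature_def by (simp add: abs_divide)
  also have "\<dots> \<le> 2 / real (wl g)" using D pos by (intro divide_right_mono) auto
  finally show ?thesis .
qed

lemma ball_sub: "word_ball G S n \<subseteq> (\<lambda>ws. fw ws) ` {ws. set ws \<subseteq> S \<and> length ws \<le> n}"
proof
  fix g assume "g \<in> word_ball G S n"
  then have g: "g \<in> carrier G" "wl g \<le> n" unfolding word_ball_def by auto
  obtain ws where "length ws = wl g" "set ws \<subseteq> S" "fw ws = g" using wl_word[OF g(1)] by blast
  then show "g \<in> (\<lambda>ws. fw ws) ` {ws. set ws \<subseteq> S \<and> length ws \<le> n}" using g
    by (intro image_eqI[of _ _ ws]) auto
qed

lemma ball_finite: "finite S \<Longrightarrow> finite (word_ball G S n)"
  by (rule finite_subset[OF ball_sub]) (intro finite_imageI finite_lists_length_le)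

lemma ball_one: "\<one> \<in> word_ball G S n"
  unfolding word_ball_def using wl_one by simp

lemma ball_mono: "m \<le> n \<Longrightarrow> word_ball G S m \<subseteq> word_ball G S n"
  unfolding word_ball_def by auto

lemma ball_large: assumes "finite S" "infinite (carrier G)"
  shows "\<exists>m. \<forall>n\<ge>m. card (word_ball G S n) \<ge> M"
proof -
  obtain F where F: "finite F" "card F = M" "F \<subseteq> carrier G"
    using infinite_arbitrarily_large[OF assms(2)] by blast
  have sub: "F \<subseteq> word_ball G S n" if "n \<ge> sum wl F" for n
  proof
    fix g assume "g \<in> F"
    then have "wl g \<le> sum wl F" using F(1) by (intro member_le_sum) auto
    then show "g \<in> word_ball G S n" unfolding word_ball_def using that F \<open>g \<in> F\<close> by auto
  qed
  show ?thesis
  proof (intro exI allI impI)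
    fix n assume "sum wl F \<le> n"
    then have "F \<subseteq> word_ball G S n" by (rule sub)
    then show "M \<le> card (word_ball G S n)" using card_mono[OF ball_finite[OF assms(1)]] F(2) by metis
  qed
qed

end

theorem mainTheorem16:
  fixes G (structure) and S :: "'a set"
  assumes "group G"
    and "infinite (carrier G)"
    and "finite S"
    and "S \<subseteq> carrier G"
    and "generate G S = carrier G"
    and "\<forall>s\<in>S. inv\<^bsub>G\<^esub> s \<in> S"
    and "\<one>\<^bsub>G\<^esub> \<notin> S"
  shows "(\<lambda>n. (1 / real (card (word_ball G S n))) *
            (\<Sum>g\<in>word_ball G S n - {\<one>\<^bsub>G\<^esub>}. curvature G S g)) \<longlonglongrightarrow> 0"
proof -
  interpret gen_group G S using assms by (simp add: gen_group_def gen_group_axioms_def)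
  have Sne: "S \<noteq> {}"
  proof
    assume "S = {}"
    then have "carrier G \<subseteq> {\<one>}" using assms(5) generate_empty by simp
    then show False using assms(2) finite_subset by blast
  qed
  define B where "B n = word_ball G S n" for n
  have Bfin: "finite (B n)" for n using ball_finite assms(3) B_def by simp
  have Bpos: "card (B n) > 0" for n using Bfin[of n] ball_one[of n] unfolding B_def by (auto simp: card_gt_0_iff)
  have est: "\<bar>(1 / real (card (B n))) * (\<Sum>g\<in>B n - {\<one>}. curvature G S g)\<bar>
      \<le> 2 * real (card (B k)) / real (card (B n)) + 2 / real k" if k: "k \<ge> 1" for n k
  proof -
    have pw: "\<bar>curvature G S g\<bar> \<le> (if g \<in> B k then 2 else 0) + 2 / real k"
      if g: "g \<in> B n - {\<one>}" for g
    proof -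
      have gc: "g \<in> carrier G" "g \<noteq> \<one>" using g unfolding B_def word_ball_def by auto
      have cb: "\<bar>curvature G S g\<bar> \<le> 2 / real (wl g)" by (rule curv_bound[OF gc assms(3) Sne])
      have p: "real (wl g) \<ge> 1" using wl_pos[OF gc] by simp
      show ?thesis
      proof (cases "g \<in> B k")
        case True
        have "2 / real (wl g) \<le> 2" using p by (simp add: divide_le_eq)
        moreover have "2 / real k \<ge> 0" by simp
        ultimately have "\<bar>curvature G S g\<bar> \<le> 2 + 2 / real k" using cb by linarith
        then show ?thesis using True by simp
      next
        case False
        then have "wl g > k" using gc unfolding B_def word_ball_def by auto
        then have "2 / real (wl g) \<le> 2 / real k" using k by (simp add: frac_le)
        then show ?thesis using cb False by simp
      qed
    qed
    have s1: "\<bar>\<Sum>g\<in>B n - {\<one>}. curvature G S g\<bar> \<le> (\<Sum>g\<in>B n - {\<one>}. \<bar>curvature G S g\<bar>)"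
      by (rule sum_abs)
    have s2: "(\<Sum>g\<in>B n - {\<one>}. \<bar>curvature G S g\<bar>) \<le> (\<Sum>g\<in>B n - {\<one>}. (if g \<in> B k then 2 else 0) + 2 / real k)"
      using pw by (rule sum_mono)
    have s3: "(\<Sum>g\<in>B n - {\<one>}. (if g \<in> B k then 2 else 0) + 2 / real k) = (\<Sum>g\<in>B n - {\<one>}. (if g \<in> B k then 2 else 0)) + real (card (B n - {\<one>})) * (2 / real k)"
      by (simp add: sum.distrib)
    have s4: "(\<Sum>g\<in>B n - {\<one>}. (if g \<in> B k then 2 else 0)) = (\<Sum>g\<in>(B n - {\<one>}) \<inter> B k. (2::real))"
      by (rule sum.inter_restrict[symmetric]) (use Bfin in simp)
    have s5: "(\<Sum>g\<in>(B n - {\<one>}) \<inter> B k. (2::real)) = 2 * real (card ((B n - {\<one>}) \<inter> B k))" by simp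
    have "card ((B n - {\<one>}) \<inter> B k) \<le> card (B k)"
      using Bfin by (intro card_mono) auto
    then have s6: "2 * real (card ((B n - {\<one>}) \<inter> B k)) \<le> 2 * real (card (B k))" by simp
    have "card (B n - {\<one>}) \<le> card (B n)"
      using Bfin by (intro card_mono) auto
    then have s7: "real (card (B n - {\<one>})) * (2 / real k) \<le> real (card (B n)) * (2 / real k)"
      by (intro mult_right_mono) simp_all
    have sb: "\<bar>\<Sum>g\<in>B n - {\<one>}. curvature G S g\<bar> \<le> 2 * real (card (B k)) + real (card (B n)) * (2 / real k)"
      using s1 s2 s3 s4 s5 s6 s7 by linarith
    have cn: "real (card (B n)) > 0" using Bpos by simp
    have "\<bar>(1 / real (card (B n))) * (\<Sum>g\<in>B n - {\<one>}. curvature G S g)\<bar>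
        = \<bar>\<Sum>g\<in>B n - {\<one>}. curvature G S g\<bar> / real (card (B n))" using cn by (simp add: abs_mult)
    also have "\<dots> \<le> (2 * real (card (B k)) + real (card (B n)) * (2 / real k)) / real (card (B n))"
      using sb cn by (simp add: divide_right_mono)
    also have "\<dots> = 2 * real (card (B k)) / real (card (B n)) + 2 / real k"
      using cn by (simp add: field_simps)
    finally show ?thesis .
  qed
  show ?thesis unfolding B_def[symmetric]
  proof (rule LIMSEQ_I)
    fix r :: real assume r: "r > 0"
    define k where "k = nat \<lceil>4 / r\<rceil> + 1"
    have k1: "k \<ge> 1" by (simp add: k_def)
    have "real k > 4 / r" unfolding k_def by linarith
    then have kr: "2 / real k < r / 2" using r k1
      by (simp add: field_simps)
    define M where "M = nat \<lceil>4 * real (card (B k)) / r\<rceil> + 1"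
    obtain m where m: "\<forall>n\<ge>m. card (B n) \<ge> M"
      using ball_large[OF assms(3,2), of M] B_def by auto
    show "\<exists>no. \<forall>n\<ge>no. norm ((1 / real (card (B n))) * (\<Sum>g\<in>B n - {\<one>}. curvature G S g) - 0) < r"
    proof (intro exI allI impI)
      fix n assume "n \<ge> m"
      then have "real (card (B n)) \<ge> real M" using m by simp
      moreover have "real M > 4 * real (card (B k)) / r" unfolding M_def by linarith
      ultimately have "real (card (B n)) > 4 * real (card (B k)) / r" by linarith
      then have "2 * real (card (B k)) / real (card (B n)) < r / 2" using r Bpos[of n]
        by (simp add: field_simps)
      then show "norm ((1 / real (card (B n))) * (\<Sum>g\<in>B n - {\<one>}. curvature G S g) - 0) < r"
        using est[OF k1, of n] kr by simp
    qed
  qed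
qed

end
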